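(* For every $A \in S(4,\mathbb{R})$ and every $P \in \operatorname{Sp}(4)$, we have $\operatorname{Pf}(P^T A P) = \operatorname{Pf}(A)$ and $\operatorname{s}(P^T A P) = \operatorname{s}(A)$. That is, the Pfaffian and the sum function are invariant under the action $\rho(P,A) = P^T A P$ of $\operatorname{Sp}(4)$ on $S(4,\mathbb{R})$.
   Context: $S(4,\mathbb{R}) = \{A \in M(4,\mathbb{R}) : A^T = -A,\ \det A \neq 0\}$. $J$ is the $4\times 4$ block-diagonal matrix $\operatorname{diag}(J_0,J_0)$ with $J_0 = \begin{bmatrix} 0 & 1 \\ -1 & 0\end{bmatrix}$, and $\operatorname{Sp}(4) = \{P \in M(4,\mathbb{R}) : P^T J P = J\}$. For $A = \begin{bmatrix} 0 & a & b & c \\ -a & 0 & d & e \\ -b & -d & 0 & f \\ -c & -e & -f & 0\end{bmatrix}$, the Pfaffian is $\operatorname{Pf}(A) = af - be + cd$ and the sum function is $\operatorname{s}(A) = a + f$. *)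

theory Defs
  imports "HOL-Analysis.Analysis" "HOL-Library.Numeral_Type"
begin

text \<open>4x4 real matrices are rendered as real^4^4. The index type 4 has the four
elements 1, 2, 3, 4 (where the numeral 4 denotes the fourth index, equal to 0 in
the ring structure of type 4).\<close>

definition skew_invertible :: "(real^4^4) set" where
  "skew_invertible = {A. transpose A = - A \<and> det A \<noteq> 0}"

definition J0 :: "real^4^4" where
  "J0 = (\<chi> i j. if (i = 1 \<and> j = 2) \<or> (i = 3 \<and> j = 4) then 1
               else if (i = 2 \<and> j = 1) \<or> (i = 4 \<and> j = 3) then -1 else 0)"

definition Sp4 :: "(real^4^4) set" where
  "Sp4 = {P. transpose P ** J0 ** P = J0}"

definition Pf :: "real^4^4 \<Rightarrow> real" where
  "Pf A = A$1$2 * A$3$4 - A$1$3 * A$2$4 + A$1$4 * A$2$3"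

definition sfun :: "real^4^4 \<Rightarrow> real" where
  "sfun A = A$1$2 + A$3$4"

end

theory Submission
  imports Defs
begin

definition DD :: "real^4^4 \<Rightarrow> real" where
  "DD P = P$1$1 * P$2$2 * P$3$3 * P$4$4 - P$1$1 * P$2$2 * P$3$4 * P$4$3 - P$1$1 * P$2$3 * P$3$2 * P$4$4 + P$1$1 * P$2$3 * P$3$4 * P$4$2 + P$1$1 * P$2$4 * P$3$2 * P$4$3 - P$1$1 * P$2$4 * P$3$3 * P$4$2 - P$1$2 * P$2$1 * P$3$3 * P$4$4 + P$1$2 * P$2$1 * P$3$4 * P$4$3 + P$1$2 * P$2$3 * P$3$1 * P$4$4 - P$1$2 * P$2$3 * P$3$4 * P$4$1 - P$1$2 * P$2$4 * P$3$1 * P$4$3 + P$1$2 * P$2$4 * P$3$3 * P$4$1 + P$1$3 * P$2$1 * P$3$2 * P$4$4 - P$1$3 * P$2$1 * P$3$4 * P$4$2 - P$1$3 * P$2$2 * P$3$1 * P$4$4 + P$1$3 * P$2$2 * P$3$4 * P$4$1 + P$1$3 * P$2$4 * P$3$1 * P$4$2 - P$1$3 * P$2$4 * P$3$2 * P$4$1 - P$1$4 * P$2$1 * P$3$2 * P$4$3 + P$1$4 * P$2$1 * P$3$3 * P$4$2 + P$1$4 * P$2$2 * P$3$1 * P$4$3 - P$1$4 * P$2$2 * P$3$3 * P$4$1 - P$1$4 * P$2$3 * P$3$1 * P$4$2 + P$1$4 * P$2$3 * P$3$2 * P$4$1"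

lemma skew_entries:
  fixes A :: "real^4^4"
  assumes "transpose A = - A"
  shows "A$i$j = - A$j$i"
proof -
  have "transpose A $ j $ i = (- A) $ j $ i" using assms by simp
  thus ?thesis by (simp add: transpose_def)
qed

lemma pf_cong:
  fixes A P :: "real^4^4"
  assumes sk: "transpose A = - A"
  shows "Pf (transpose P ** A ** P) = DD P * Pf A"
proof -
  have d: "A$i$i = 0" for i using skew_entries[OF sk, of i i] by simp
  have s21: "A$2$1 = - A$1$2" and s31: "A$3$1 = - A$1$3" and s41: "A$4$1 = - A$1$4"
   and s32: "A$3$2 = - A$2$3" and s42: "A$4$2 = - A$2$4" and s43: "A$4$3 = - A$3$4"
    using skew_entries[OF sk] by blast+
  show ?thesis
    unfolding Pf_def DD_def matrix_matrix_mult_def transpose_def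
    by (simp add: sum_4 d s21 s31 s41 s32 s42 s43 algebra_simps)
qed

lemma matrix_neg_mult:
  fixes A B :: "real^4^4"
  shows "(- A) ** B = - (A ** B)" "A ** (- B) = - (A ** B)"
  by (simp_all add: matrix_matrix_mult_def vec_eq_iff sum_negf)

lemma J0J0: "J0 ** J0 = - mat 1"
  by (simp add: J0_def matrix_matrix_mult_def sum_4 mat_def vec_eq_iff forall_4)

lemma J0_skew: "transpose J0 = - J0"
  by (simp add: J0_def transpose_def vec_eq_iff forall_4)

lemma Pf_J0: "Pf J0 = 1"
  by (simp add: J0_def Pf_def)

lemma sfun_trace:
  fixes X :: "real^4^4"
  assumes "transpose X = - X"
  shows "sfun X = - trace (J0 ** X) / 2"
proof -
  have s21: "X$2$1 = - X$1$2" and s43: "X$4$3 = - X$3$4"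
    using skew_entries[OF assms] by blast+
  show ?thesis
    by (simp add: sfun_def trace_def J0_def matrix_matrix_mult_def sum_4 s21 s43)
qed

lemma sp_right:
  fixes P :: "real^4^4"
  assumes h: "transpose P ** J0 ** P = J0"
  shows "P ** J0 ** transpose P = J0"
proof -
  define L where "L = - (J0 ** transpose P ** J0)"
  have LP: "L ** P = mat 1"
  proof -
    have "L ** P = - (J0 ** (transpose P ** J0 ** P))"
      by (simp add: L_def matrix_mul_assoc matrix_neg_mult)
    also have "... = mat 1" using h J0J0 by (simp add: matrix_neg_mult)
    finally show ?thesis .
  qed
  then obtain R where R: "P ** R = mat 1"
    using matrix_left_right_inverse by blast
  have "R = L ** P ** R" using LP by simp
  also have "... = L" using R by (simp add: matrix_mul_assoc[symmetric])
  finally have PL: "P ** L = mat 1" using R by simp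
  hence "- (P ** J0 ** transpose P ** J0) ** J0 = J0"
    by (simp add: L_def matrix_mul_assoc matrix_neg_mult)
  thus ?thesis using J0J0
    by (simp add: matrix_mul_assoc[symmetric] matrix_neg_mult)
qed

theorem theorem2p1:
  fixes A P :: "real^4^4"
  assumes "A \<in> skew_invertible" and "P \<in> Sp4"
  shows "Pf (transpose P ** A ** P) = Pf A \<and> sfun (transpose P ** A ** P) = sfun A"
proof -
  have sk: "transpose A = - A" using assms(1) by (simp add: skew_invertible_def)
  have h: "transpose P ** J0 ** P = J0" using assms(2) by (simp add: Sp4_def)
  have "Pf J0 = DD P * Pf J0" using pf_cong[OF J0_skew, of P] h by simp
  hence D1: "DD P = 1" using Pf_J0 by simp
  have skM: "transpose (transpose P ** A ** P) = - (transpose P ** A ** P)"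
    by (simp add: matrix_transpose_mul sk matrix_mul_assoc matrix_neg_mult)
  have "trace (J0 ** (transpose P ** A ** P)) = trace ((J0 ** transpose P ** A) ** P)"
    by (simp add: matrix_mul_assoc)
  also have "... = trace (P ** (J0 ** transpose P ** A))" by (rule trace_mul_sym)
  also have "... = trace ((P ** J0 ** transpose P) ** A)" by (simp add: matrix_mul_assoc)
  also have "... = trace (J0 ** A)" using sp_right[OF h] by simp
  finally have tr: "trace (J0 ** (transpose P ** A ** P)) = trace (J0 ** A)" .
  show ?thesis
    using pf_cong[OF sk, of P] D1 sfun_trace[OF skM] sfun_trace[OF sk] tr by simp
qed

end
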